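(* Let $G$ be a connected orientable ribbon graph with root vertex $\bar v$, data as in the context, and let $e$ be an edge joining two distinct vertices $v_1,v_2$ such that $G-e$ is connected. Then $$\det M_G=\alpha_e\det M_{G-e}+\det M_{G/e}.$$ (If $G-e$ is disconnected, the identity holds with $\det M_{G-e}:=0$.)
   Context: Ribbon graph: finite graph (loops, multiple edges allowed) with, at each vertex, a cyclic order of its incident half-edges. Orient each edge arbitrarily. At each vertex $v$ choose a linear order of its half-edge positions $1,\dots,\deg v$ compatible with the cyclic order. For an edge $e$, vertex $v$ and position $i$: $\varepsilon^v_{ei}=+1$ if $e$ starts at position $i$ of $v$, $-1$ if it ends there, $0$ otherwise (a self-loop has both a $+1$ and a $-1$ at its vertex). Fix $\theta>0$ and edge parameters $\alpha_e$. For edges $e,e'$ set $f_{ee'}=-\frac{\theta}{4}\sum_v\sum_{i,j}\mathrm{sgn}(j-i)\,\varepsilon^v_{ei}\varepsilon^v_{e'j}$ (antisymmetric, $f_{ee}=0$). $M_G$ is the square matrix indexed by $E\sqcup(V\setminus\{\bar v\})$ with $(M_G)_{ee}=\alpha_e$, $(M_G)_{ee'}=f_{ee'}$ for $e\neq e'$, $(M_G)_{ev}=-\sum_i\varepsilon^v_{ei}$, $(M_G)_{ve}=\sum_i\varepsilon^v_{ei}$, $(M_G)_{vv'}=0$. (Its determinant is the first noncommutative Symanzik polynomial $U^\star_G$.) $G-e$: remove $e$ (the cyclic orders at $v_1,v_2$ lose the half-edge of $e$). $G/e$ (ribbon contraction): if the cyclic order at $v_1$ is $(e,h_1,\dots,h_k)$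 and at $v_2$ is $(e,h'_1,\dots,h'_m)$, remove $e$ and replace $v_1,v_2$ by one vertex with cyclic order $(h_1,\dots,h_k,h'_1,\dots,h'_m)$; this vertex is the root if $\bar v\in\{v_1,v_2\}$. Linear orders compatible with the cyclic orders are chosen at the vertices of $G-e$ and $G/e$. *)

theory Defs
  imports Complex_Main "HOL-Combinatorics.Permutations"
begin

(* At each vertex v, rot v is a linear order (list) of the half-edges at v; the cyclic
   order is this list up to rotation.  A half-edge is (e, True) if e starts at v,
   (e, False) if e ends at v (a self-loop contributes both). *)

definition ribbon_wf ::
  "'v set \<Rightarrow> 'e set \<Rightarrow> ('e \<Rightarrow> 'v) \<Rightarrow> ('e \<Rightarrow> 'v) \<Rightarrow> ('v \<Rightarrow> ('e \<times> bool) list) \<Rightarrow> bool" where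
  "ribbon_wf V E src tgt rot \<longleftrightarrow> finite V \<and> finite E \<and>
     (\<forall>e\<in>E. src e \<in> V \<and> tgt e \<in> V) \<and>
     (\<forall>v\<in>V. distinct (rot v) \<and>
        set (rot v) = {(e, True) | e. e \<in> E \<and> src e = v} \<union> {(e, False) | e. e \<in> E \<and> tgt e = v})"

definition graph_connected ::
  "'v set \<Rightarrow> 'e set \<Rightarrow> ('e \<Rightarrow> 'v) \<Rightarrow> ('e \<Rightarrow> 'v) \<Rightarrow> bool" where
  "graph_connected V E src tgt \<longleftrightarrow>
     (\<forall>u\<in>V. \<forall>w\<in>V. (u, w) \<in> ({(src e, tgt e) | e. e \<in> E} \<union> {(tgt e, src e) | e. e \<in> E})\<^sup>*)"

definition eps :: "('v \<Rightarrow> ('e \<times> bool) list) \<Rightarrow> 'v \<Rightarrow> 'e \<Rightarrow> nat \<Rightarrow> real" where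
  "eps rot v e i = (if i < length (rot v) then
      (if rot v ! i = (e, True) then 1 else if rot v ! i = (e, False) then -1 else 0) else 0)"

definition fcoef :: "real \<Rightarrow> 'v set \<Rightarrow> ('v \<Rightarrow> ('e \<times> bool) list) \<Rightarrow> 'e \<Rightarrow> 'e \<Rightarrow> real" where
  "fcoef \<theta> V rot e e' = - (\<theta> / 4) * (\<Sum>v\<in>V. \<Sum>i<length (rot v). \<Sum>j<length (rot v).
      sgn (real j - real i) * eps rot v e i * eps rot v e' j)"

definition incid :: "('v \<Rightarrow> ('e \<times> bool) list) \<Rightarrow> 'v \<Rightarrow> 'e \<Rightarrow> real" where
  "incid rot v e = (\<Sum>i<length (rot v). eps rot v e i)"

definition Midx :: "'e set \<Rightarrow> 'v set \<Rightarrow> 'v \<Rightarrow> ('e + 'v) set" where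
  "Midx E V r = Inl ` E \<union> Inr ` (V - {r})"

definition Mmat :: "real \<Rightarrow> ('e \<Rightarrow> real) \<Rightarrow> 'v set \<Rightarrow> ('v \<Rightarrow> ('e \<times> bool) list)
     \<Rightarrow> ('e + 'v) \<Rightarrow> ('e + 'v) \<Rightarrow> real" where
  "Mmat \<theta> \<alpha> V rot x y = (case (x, y) of
      (Inl e, Inl e') \<Rightarrow> (if e = e' then \<alpha> e else fcoef \<theta> V rot e e')
    | (Inl e, Inr v) \<Rightarrow> - incid rot v e
    | (Inr v, Inl e) \<Rightarrow> incid rot v e
    | (Inr v, Inr v') \<Rightarrow> 0)"

definition det_on :: "'i set \<Rightarrow> ('i \<Rightarrow> 'i \<Rightarrow> real) \<Rightarrow> real" where
  "det_on I A = (\<Sum>p\<in>{p. p permutes I}. of_int (sign p) * (\<Prod>i\<in>I. A i (p i)))"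

(* cyclic equivalence: xs is a linear order compatible with the cyclic order of ys *)
definition cyc_compat :: "'a list \<Rightarrow> 'a list \<Rightarrow> bool" where
  "cyc_compat xs ys \<longleftrightarrow> (\<exists>n. xs = rotate n ys)"

(* given a list (cyclic order) containing exactly one half-edge of e,
   the half-edges following it cyclically, with e removed: (e,h1..hk) \<mapsto> (h1..hk) *)
definition cut_after :: "'e \<Rightarrow> ('e \<times> bool) list \<Rightarrow> ('e \<times> bool) list" where
  "cut_after e r = (let i = length (takeWhile (\<lambda>h. fst h \<noteq> e) r) in drop (Suc i) r @ take i r)"

(* ribbon contraction of edge e (non-loop): vertices src e and tgt e merged into
   one vertex; the merged vertex is represented by tgt e if tgt e is the root, else by src e *)
definition keepv :: "('e \<Rightarrow> 'v) \<Rightarrow> ('e \<Rightarrow> 'v) \<Rightarrow> 'v \<Rightarrow> 'e \<Rightarrow> 'v" where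
  "keepv src tgt r e = (if tgt e = r then tgt e else src e)"

definition dropv :: "('e \<Rightarrow> 'v) \<Rightarrow> ('e \<Rightarrow> 'v) \<Rightarrow> 'v \<Rightarrow> 'e \<Rightarrow> 'v" where
  "dropv src tgt r e = (if tgt e = r then src e else tgt e)"

definition merged_rot :: "('e \<Rightarrow> 'v) \<Rightarrow> ('e \<Rightarrow> 'v) \<Rightarrow> ('v \<Rightarrow> ('e \<times> bool) list) \<Rightarrow> 'e \<Rightarrow> ('e \<times> bool) list" where
  "merged_rot src tgt rot e = cut_after e (rot (src e)) @ cut_after e (rot (tgt e))"

definition contr_map :: "('e \<Rightarrow> 'v) \<Rightarrow> ('e \<Rightarrow> 'v) \<Rightarrow> 'v \<Rightarrow> 'e \<Rightarrow> ('e \<Rightarrow> 'v) \<Rightarrow> ('e \<Rightarrow> 'v)" where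
  "contr_map src tgt r e g = (\<lambda>x. if g x = dropv src tgt r e then keepv src tgt r e else g x)"

end

theory Submission
  imports Defs
begin


lemma det_on_cong:
  assumes "\<And>i j. i \<in> I \<Longrightarrow> j \<in> I \<Longrightarrow> A i j = B i j"
  shows "det_on I A = det_on I B"
  unfolding det_on_def
proof (rule sum.cong[OF refl])
  fix p assume "p \<in> {p. p permutes I}"
  then have "(\<Prod>i\<in>I. A i (p i)) = (\<Prod>i\<in>I. B i (p i))"
    by (intro prod.cong refl assms) (auto simp: permutes_in_image)
  then show "of_int (sign p) * (\<Prod>i\<in>I. A i (p i)) = of_int (sign p) * (\<Prod>i\<in>I. B i (p i))" by simp
qed

lemma det_on_transpose:
  assumes fin: "finite I"
  shows "det_on I (\<lambda>i j. A j i) = det_on I A"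
proof -
  have "det_on I (\<lambda>i j. A j i) = (\<Sum>p\<in>{p. p permutes I}. of_int (sign p) * (\<Prod>i\<in>I. A (p i) i))"
    by (simp add: det_on_def)
  also have "\<dots> = (\<Sum>p\<in>{p. p permutes I}. of_int (sign p) * (\<Prod>j\<in>I. A j (inv p j)))"
  proof (rule sum.cong[OF refl])
    fix p assume "p \<in> {p. p permutes I}"
    then have p: "p permutes I" by simp
    have "(\<Prod>j\<in>I. A j (inv p j)) = (\<Prod>i\<in>I. A (p i) (inv p (p i)))"
      using prod.reindex_bij_betw[OF permutes_imp_bij[OF p], of "\<lambda>j. A j (inv p j)"] by simp
    also have "\<dots> = (\<Prod>i\<in>I. A (p i) i)"
      using permutes_inverses(2)[OF p] by simp
    finally show "of_int (sign p) * (\<Prod>i\<in>I. A (p i) i) = of_int (sign p) * (\<Prod>j\<in>I. A j (inv p j))" by simp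
  qed
  also have "\<dots> = (\<Sum>p\<in>{p. p permutes I}. of_int (sign (inv p)) * (\<Prod>j\<in>I. A j (inv p j)))"
  proof (rule sum.cong[OF refl])
    fix p assume "p \<in> {p. p permutes I}"
    then have "permutation p" using fin permutation_permutes by auto
    then show "of_int (sign p) * (\<Prod>j\<in>I. A j (inv p j)) = of_int (sign (inv p)) * (\<Prod>j\<in>I. A j (inv p j))"
      by (simp add: sign_inverse)
  qed
  also have "\<dots> = det_on I A"
    unfolding det_on_def using sum_permutations_inverse[symmetric, of "\<lambda>q. of_int (sign q) * (\<Prod>j\<in>I. A j (q j))" I]
    by simp
  finally show ?thesis .
qed



lemma perm_fix_iff:
  assumes k: "k \<in> I"
  shows "{p. p permutes I - {k}} = {p. p permutes I \<and> p k = k}"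
proof (rule set_eqI, rule iffI)
  fix p assume "p \<in> {p. p permutes I - {k}}"
  then have p: "p permutes I - {k}" by simp
  have "p permutes I" by (rule permutes_subset[OF p]) blast
  moreover have "p k = k" by (rule permutes_not_in[OF p]) simp
  ultimately show "p \<in> {p. p permutes I \<and> p k = k}" by simp
next
  fix p assume "p \<in> {p. p permutes I \<and> p k = k}"
  then have p: "p permutes I" "p k = k" by auto
  have "p permutes I - {k}"
  proof (rule permutes_superset[OF p(1)])
    fix x assume "x \<in> I - (I - {k})" then have "x = k" by simp
    then show "p x = x" using p(2) by simp
  qed
  then show "p \<in> {p. p permutes I - {k}}" by simp
qed

lemma det_on_row_single:
  assumes fin: "finite I" and k: "k \<in> I"
    and z: "\<And>j. j \<in> I \<Longrightarrow> j \<noteq> k \<Longrightarrow> A k j = 0"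
  shows "det_on I A = A k k * det_on (I - {k}) A"
proof -
  let ?t = "\<lambda>p. of_int (sign p) * (\<Prod>i\<in>I. A i (p i))"
  have "det_on I A = (\<Sum>p\<in>{p. p permutes I}. ?t p)" by (simp add: det_on_def)
  also have "\<dots> = (\<Sum>p\<in>{p. p permutes I \<and> p k = k}. ?t p)"
  proof (rule sum.mono_neutral_right)
    show "finite {p. p permutes I}" using fin by (simp add: finite_permutations)
    show "{p. p permutes I \<and> p k = k} \<subseteq> {p. p permutes I}" by blast
    show "\<forall>p\<in>{p. p permutes I} - {p. p permutes I \<and> p k = k}. ?t p = 0"
    proof
      fix p assume "p \<in> {p. p permutes I} - {p. p permutes I \<and> p k = k}"
      then have p: "p permutes I" "p k \<noteq> k" by auto
      have "p k \<in> I" using permutes_in_image[OF p(1)] k by simp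
      then have "A k (p k) = 0" using z p(2) by simp
      then have "(\<Prod>i\<in>I. A i (p i)) = 0" by (rule prod_zero[OF fin, OF bexI[OF _ k]])
      then show "?t p = 0" by simp
    qed
  qed
  also have "\<dots> = (\<Sum>p\<in>{p. p permutes I - {k}}. A k k * (of_int (sign p) * (\<Prod>i\<in>I - {k}. A i (p i))))"
    unfolding perm_fix_iff[OF k]
  proof (rule sum.cong[OF refl])
    fix p assume "p \<in> {p. p permutes I \<and> p k = k}"
    then have "p k = k" by simp
    then show "?t p = A k k * (of_int (sign p) * (\<Prod>i\<in>I - {k}. A i (p i)))"
      using prod.remove[OF fin k, of "\<lambda>i. A i (p i)"] by simp
  qed
  also have "\<dots> = A k k * det_on (I - {k}) A"
    by (simp add: det_on_def sum_distrib_left)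
  finally show ?thesis .
qed



lemma det_on_col_single:
  assumes fin: "finite I" and k: "k \<in> I"
    and z: "\<And>j. j \<in> I \<Longrightarrow> j \<noteq> k \<Longrightarrow> A j k = 0"
  shows "det_on I A = A k k * det_on (I - {k}) A"
proof -
  have "det_on I A = det_on I (\<lambda>i j. A j i)" by (rule det_on_transpose[OF fin, symmetric])
  also have "\<dots> = A k k * det_on (I - {k}) (\<lambda>i j. A j i)"
    by (rule det_on_row_single[OF fin k]) (simp add: z)
  also have "det_on (I - {k}) (\<lambda>i j. A j i) = det_on (I - {k}) A"
    by (rule det_on_transpose[OF finite_Diff[OF fin]])
  finally show ?thesis .
qed

lemma det_on_row_linear:
  assumes fin: "finite I" and k: "k \<in> I"
  shows "det_on I (\<lambda>i j. if i = k then u j + c * v j else A i j)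
       = det_on I (\<lambda>i j. if i = k then u j else A i j) + c * det_on I (\<lambda>i j. if i = k then v j else A i j)"
proof -
  have e: "(\<Prod>i\<in>I. (if i = k then w (p i) else A i (p i))) = w (p k) * (\<Prod>i\<in>I - {k}. A i (p i))" for w p
  proof -
    have "(\<Prod>i\<in>I. (if i = k then w (p i) else A i (p i)))
        = (if k = k then w (p k) else A k (p k)) * (\<Prod>i\<in>I - {k}. (if i = k then w (p i) else A i (p i)))"
      by (rule prod.remove[OF fin k])
    also have "(\<Prod>i\<in>I - {k}. (if i = k then w (p i) else A i (p i))) = (\<Prod>i\<in>I - {k}. A i (p i))"
      by (rule prod.cong) auto
    finally show ?thesis by simp
  qed
  have "det_on I (\<lambda>i j. if i = k then u j + c * v j else A i j)
      = (\<Sum>p\<in>{p. p permutes I}. of_int (sign p) * ((u (p k) + c * v (p k)) * (\<Prod>i\<in>I - {k}. A i (p i))))"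
    unfolding det_on_def using e[of "\<lambda>j. u j + c * v j"] by simp
  also have "\<dots> = (\<Sum>p\<in>{p. p permutes I}. of_int (sign p) * (u (p k) * (\<Prod>i\<in>I - {k}. A i (p i))))
      + c * (\<Sum>p\<in>{p. p permutes I}. of_int (sign p) * (v (p k) * (\<Prod>i\<in>I - {k}. A i (p i))))"
    unfolding sum_distrib_left sum.distrib[symmetric] by (rule sum.cong[OF refl]) (simp add: algebra_simps)
  also have "\<dots> = det_on I (\<lambda>i j. if i = k then u j else A i j) + c * det_on I (\<lambda>i j. if i = k then v j else A i j)"
    unfolding det_on_def using e[of u] e[of v] by simp
  finally show ?thesis .
qed

lemma det_on_equal_rows:
  assumes fin: "finite I" and ik: "i \<in> I" "k \<in> I" "i \<noteq> k"
    and eq: "\<And>j. A i j = A k j"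
  shows "det_on I A = 0"
proof -
  let ?\<tau> = "Transposition.transpose i k"
  let ?t = "\<lambda>p. of_int (sign p) * (\<Prod>x\<in>I. A x (p x))"
  have \<tau>: "?\<tau> permutes I" using ik by (simp add: permutes_swap_id)
  have "det_on I A = (\<Sum>p\<in>{p. p permutes I}. ?t p)" by (simp add: det_on_def)
  also have "\<dots> = (\<Sum>p\<in>{p. p permutes I}. ?t (p \<circ> ?\<tau>))"
    by (rule sum_permutations_compose_right[OF \<tau>])
  also have "\<dots> = (\<Sum>p\<in>{p. p permutes I}. - ?t p)"
  proof (rule sum.cong[OF refl])
    fix p assume "p \<in> {p. p permutes I}"
    then have p: "p permutes I" by simp
    have pp: "permutation p" using p fin permutation_permutes by auto
    have s: "sign (p \<circ> ?\<tau>) = - sign p"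
      using ik by (simp add: sign_compose[OF pp permutation_swap_id] sign_swap_id)
    have "(\<Prod>x\<in>I. A x ((p \<circ> ?\<tau>) x)) = (\<Prod>x\<in>I. A (?\<tau> (?\<tau> x)) (p (?\<tau> x)))" by simp
    also have "\<dots> = (\<Prod>y\<in>I. A (?\<tau> y) (p y))"
      using prod.reindex_bij_betw[OF permutes_imp_bij[OF \<tau>], of "\<lambda>y. A (?\<tau> y) (p y)"] by simp
    also have "\<dots> = (\<Prod>y\<in>I. A y (p y))"
    proof (rule prod.cong[OF refl])
      fix y show "A (?\<tau> y) (p y) = A y (p y)"
        using eq by (cases "y = i"; cases "y = k") (auto simp: Transposition.transpose_def)
    qed
    finally show "?t (p \<circ> ?\<tau>) = - ?t p" using s by simp
  qed
  also have "\<dots> = - det_on I A" by (simp add: det_on_def sum_negf)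
  finally show ?thesis by simp
qed

lemma det_on_row_add:
  assumes fin: "finite I" and ik: "i \<in> I" "k \<in> I" "i \<noteq> k"
  shows "det_on I (\<lambda>x y. if x = i then A x y + c * A k y else A x y) = det_on I A"
proof -
  have "det_on I (\<lambda>x y. if x = i then A x y + c * A k y else A x y)
      = det_on I (\<lambda>x y. if x = i then A i y + c * A k y else A x y)"
    by (rule det_on_cong) simp
  also have "\<dots> = det_on I (\<lambda>x y. if x = i then A i y else A x y) + c * det_on I (\<lambda>x y. if x = i then A k y else A x y)"
    by (rule det_on_row_linear[OF fin ik(1)])
  also have "det_on I (\<lambda>x y. if x = i then A k y else A x y) = 0"
    by (rule det_on_equal_rows[OF fin ik]) (use ik in simp)
  also have "det_on I (\<lambda>x y. if x = i then A i y else A x y) = det_on I A"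
    by (rule det_on_cong) simp
  finally show ?thesis by simp
qed



lemma det_on_rows_add:
  assumes fin: "finite I" and k: "k \<in> I" and dk: "d k = 0"
  shows "det_on I (\<lambda>x y. A x y + d x * A k y) = det_on I A"
proof -
  have gen: "finite J \<Longrightarrow> J \<subseteq> I - {k} \<Longrightarrow>
      det_on I (\<lambda>x y. if x \<in> J then A x y + d x * A k y else A x y) = det_on I A" for J
  proof (induction J rule: finite_induct)
    case empty then show ?case by simp
  next
    case (insert j J)
    let ?B = "\<lambda>x y. if x \<in> J then A x y + d x * A k y else A x y"
    have jI: "j \<in> I" "j \<noteq> k" using insert by auto
    have "det_on I (\<lambda>x y. if x \<in> insert j J then A x y + d x * A k y else A x y)
        = det_on I (\<lambda>x y. if x = j then ?B x y + d j * ?B k y else ?B x y)"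
      using insert(2,4) by (intro det_on_cong) auto
    also have "\<dots> = det_on I ?B" by (rule det_on_row_add[OF fin jI(1) k jI(2)])
    also have "\<dots> = det_on I A" using insert by simp
    finally show ?case .
  qed
  have "det_on I (\<lambda>x y. A x y + d x * A k y)
      = det_on I (\<lambda>x y. if x \<in> I - {k} then A x y + d x * A k y else A x y)"
    using dk by (intro det_on_cong) auto
  also have "\<dots> = det_on I A" using fin by (intro gen) auto
  finally show ?thesis .
qed

lemma det_on_rows_add_multi:
  assumes fin: "finite I" and K: "K \<subseteq> I" and c0: "\<And>x k. x \<in> K \<Longrightarrow> k \<in> K \<Longrightarrow> c x k = 0"
  shows "det_on I (\<lambda>x y. A x y + (\<Sum>k\<in>K. c x k * A k y)) = det_on I A"
proof -
  have "finite K" using fin K finite_subset by auto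
  then show ?thesis using K c0
  proof (induction K rule: finite_induct)
    case empty then show ?case by simp
  next
    case (insert k0 K)
    let ?B = "\<lambda>x y. A x y + (\<Sum>k\<in>K. c x k * A k y)"
    have s0: "(\<Sum>k\<in>K. c k0 k * A k y) = 0" for y using insert.prems(2) by (intro sum.neutral) auto
    have "det_on I (\<lambda>x y. A x y + (\<Sum>k\<in>insert k0 K. c x k * A k y))
        = det_on I (\<lambda>x y. ?B x y + c x k0 * ?B k0 y)"
      using insert(1,2) by (intro det_on_cong) (simp add: s0 add_ac)
    also have "\<dots> = det_on I ?B"
      using insert by (intro det_on_rows_add[OF fin]) auto
    also have "\<dots> = det_on I A" using insert by auto
    finally show ?case .
  qed
qed

lemma det_on_cols_add_multi:
  assumes fin: "finite I" and K: "K \<subseteq> I" and c0: "\<And>x k. x \<in> K \<Longrightarrow> k \<in> K \<Longrightarrow> c x k = 0"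
  shows "det_on I (\<lambda>x y. A x y + (\<Sum>k\<in>K. c y k * A x k)) = det_on I A"
proof -
  let ?B = "\<lambda>x y. A y x + (\<Sum>k\<in>K. c x k * A y k)"
  have "det_on I (\<lambda>i j. ?B j i) = det_on I ?B" by (rule det_on_transpose[OF fin])
  also have "\<dots> = det_on I (\<lambda>i j. A j i)" by (rule det_on_rows_add_multi[OF fin K c0])
  also have "\<dots> = det_on I A" by (rule det_on_transpose[OF fin])
  finally show ?thesis .
qed

lemma det_on_rowcol_add:
  assumes fin: "finite I" and K: "K \<subseteq> I"
    and c0: "\<And>x k. x \<in> K \<Longrightarrow> k \<in> K \<Longrightarrow> c x k = 0"
    and c0': "\<And>x k. x \<in> K \<Longrightarrow> k \<in> K \<Longrightarrow> c' x k = 0"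
    and A0: "\<And>k k'. k \<in> K \<Longrightarrow> k' \<in> K \<Longrightarrow> A k k' = 0"
  shows "det_on I (\<lambda>x y. A x y + (\<Sum>k\<in>K. c x k * A k y) + (\<Sum>k\<in>K. c' y k * A x k)) = det_on I A"
proof -
  let ?B = "\<lambda>x y. A x y + (\<Sum>k\<in>K. c x k * A k y)"
  have "\<And>x k. k \<in> K \<Longrightarrow> ?B x k = A x k" using A0 by simp
  then have "det_on I (\<lambda>x y. A x y + (\<Sum>k\<in>K. c x k * A k y) + (\<Sum>k\<in>K. c' y k * A x k))
      = det_on I (\<lambda>x y. ?B x y + (\<Sum>k\<in>K. c' y k * ?B x k))"
    by (intro det_on_cong) simp
  also have "\<dots> = det_on I ?B" by (rule det_on_cols_add_multi[OF fin K c0'])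
  also have "\<dots> = det_on I A" by (rule det_on_rows_add_multi[OF fin K c0])
  finally show ?thesis .
qed



lemma det_on_schur2:
  assumes fin: "finite I" and eI: "e \<in> I" and dI: "d \<in> I" and ed: "e \<noteq> d"
    and Aee: "A e e = 0" and Add: "A d d = 0" and Aed: "A e d = - \<sigma>" and Ade: "A d e = \<sigma>"
    and \<sigma>: "\<sigma> \<noteq> 0"
  shows "det_on I A = \<sigma> * \<sigma> * det_on (I - {e, d}) (\<lambda>x y. A x y + (A x d * A e y - A x e * A d y) / \<sigma>)"
proof -
  define S where "S x y = A x y + (A x d * A e y - A x e * A d y) / \<sigma>" for x y
  have K: "{e, d} \<subseteq> I" using eI dI by simp
  define c where "c x k = (if x \<in> {e,d} then 0 else if k = e then A x d / \<sigma> else - A x e / \<sigma>)" for x k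
  define B1 where "B1 x y = A x y + (\<Sum>k\<in>{e,d}. c x k * A k y)" for x y
  have d1: "det_on I B1 = det_on I A" unfolding B1_def
    by (rule det_on_rows_add_multi[OF fin K]) (simp add: c_def)
  have B1e: "B1 e y = A e y" for y using ed by (simp add: B1_def c_def)
  have B1d: "B1 d y = A d y" for y using ed by (simp add: B1_def c_def)
  have B1xe: "B1 x e = 0" if "x \<notin> {e,d}" for x using that ed \<sigma> Aee Ade
    by (simp add: B1_def c_def field_simps)
  have B1xd: "B1 x d = 0" if "x \<notin> {e,d}" for x using that ed \<sigma> Aed Add
    by (simp add: B1_def c_def field_simps)
  have B1xy: "B1 x y = S x y" if "x \<notin> {e,d}" for x y using that ed \<sigma>
    by (simp add: B1_def c_def S_def field_simps)
  define c' where "c' y k = (if y \<in> {e,d} then 0 else if k = e then - B1 d y / \<sigma> else B1 e y / \<sigma>)" for y k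
  define B2 where "B2 x y = B1 x y + (\<Sum>k\<in>{e,d}. c' y k * B1 x k)" for x y
  have d2: "det_on I B2 = det_on I B1" unfolding B2_def
    by (rule det_on_cols_add_multi[OF fin K]) (simp add: c'_def)
  have B2xe: "B2 x e = B1 x e" for x using ed by (simp add: B2_def c'_def)
  have B2xd: "B2 x d = B1 x d" for x using ed by (simp add: B2_def c'_def)
  have B2ey: "B2 e y = 0" if "y \<notin> {e,d}" for y using that ed \<sigma> B1e Aee Aed
    by (simp add: B2_def c'_def field_simps)
  have B2dy: "B2 d y = 0" if "y \<notin> {e,d}" for y using that ed \<sigma> B1d Ade Add
    by (simp add: B2_def c'_def field_simps)
  have B2xy: "B2 x y = S x y" if "x \<notin> {e,d}" "y \<notin> {e,d}" for x y using that ed \<sigma> B1xe B1xd B1xy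
    by (simp add: B2_def c'_def)
  define B3 where "B3 x y = B2 x y + (\<Sum>k\<in>{d}. (if y = e then 1 else 0) * B2 x k)" for x y
  have d3: "det_on I B3 = det_on I B2" unfolding B3_def
    by (rule det_on_cols_add_multi[OF fin]) (use dI ed in auto)
  define B4 where "B4 x y = B3 x y + (\<Sum>k\<in>{e}. (if x = d then 1 else 0) * B3 k y)" for x y
  have d4: "det_on I B4 = det_on I B3" unfolding B4_def
    by (rule det_on_rows_add_multi[OF fin]) (use eI ed in auto)
  have B4ee: "B4 e e = - \<sigma>"
    using ed by (simp add: B4_def B3_def B2xe B2xd B1e Aee Aed)
  have B4xe: "B4 x e = 0" if "x \<noteq> e" for x
  proof (cases "x = d")
    case True then show ?thesis using ed by (simp add: B4_def B3_def B2xe B2xd B1e B1d Aee Aed Ade Add)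
  next
    case False then show ?thesis using that ed by (simp add: B4_def B3_def B2xe B2xd B1xe B1xd)
  qed
  have B4dd: "B4 d d = - \<sigma>"
    using ed by (simp add: B4_def B3_def B2xe B2xd B1e B1d Aed Add)
  have B4dy: "B4 d y = 0" if "y \<notin> {e,d}" for y
    using that ed by (simp add: B4_def B3_def B2ey B2dy)
  have B4xy: "B4 x y = S x y" if "x \<notin> {e,d}" "y \<notin> {e,d}" for x y
    using that by (simp add: B4_def B3_def B2xy)
  have "det_on I B4 = B4 e e * det_on (I - {e}) B4"
    by (rule det_on_col_single[OF fin eI]) (use B4xe in auto)
  also have "det_on (I - {e}) B4 = B4 d d * det_on (I - {e} - {d}) B4"
    by (rule det_on_row_single) (use fin dI ed B4dy in auto)
  also have "I - {e} - {d} = I - {e, d}" by auto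
  also have "det_on (I - {e, d}) B4 = det_on (I - {e, d}) S"
    by (rule det_on_cong) (simp add: B4xy)
  finally have "det_on I B4 = \<sigma> * \<sigma> * det_on (I - {e, d}) S" using B4ee B4dd by simp
  then show ?thesis using d1 d2 d3 d4 by (simp add: S_def[abs_def])
qed



lemma det_on_split_diag:
  assumes fin: "finite I" and k: "k \<in> I"
  shows "det_on I A = A k k * det_on (I - {k}) A + det_on I (\<lambda>x y. if x = k \<and> y = k then 0 else A x y)"
proof -
  let ?u = "\<lambda>j. if j = k then 0 else A k j"
  let ?v = "\<lambda>j. if j = k then (1::real) else 0"
  have "det_on I A = det_on I (\<lambda>i j. if i = k then ?u j + A k k * ?v j else A i j)"
    by (rule det_on_cong) auto
  also have "\<dots> = det_on I (\<lambda>i j. if i = k then ?u j else A i j) + A k k * det_on I (\<lambda>i j. if i = k then ?v j else A i j)"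
    by (rule det_on_row_linear[OF fin k])
  also have "det_on I (\<lambda>i j. if i = k then ?u j else A i j) = det_on I (\<lambda>x y. if x = k \<and> y = k then 0 else A x y)"
    by (rule det_on_cong) auto
  also have "det_on I (\<lambda>i j. if i = k then ?v j else A i j)
      = (\<lambda>i j. if i = k then ?v j else A i j) k k * det_on (I - {k}) (\<lambda>i j. if i = k then ?v j else A i j)"
    by (rule det_on_row_single[OF fin k]) simp
  also have "det_on (I - {k}) (\<lambda>i j. if i = k then ?v j else A i j) = det_on (I - {k}) A"
    by (rule det_on_cong) auto
  finally show ?thesis by simp
qed

definition pe :: "('e \<times> bool) \<Rightarrow> 'e \<Rightarrow> real" where
  "pe h x = (if fst h = x then (if snd h then 1 else -1) else 0)"

definition Sl :: "('e \<times> bool) list \<Rightarrow> 'e \<Rightarrow> real" where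
  "Sl L x = sum_list (map (\<lambda>h. pe h x) L)"

fun Wl :: "('e \<times> bool) list \<Rightarrow> 'e \<Rightarrow> 'e \<Rightarrow> real" where
  "Wl [] x y = 0"
| "Wl (h # L) x y = pe h x * Sl L y - pe h y * Sl L x + Wl L x y"

lemma Sl_simps[simp]: "Sl [] x = 0" "Sl (h # L) x = pe h x + Sl L x"
  by (simp_all add: Sl_def)

lemma Sl_append[simp]: "Sl (L @ M) x = Sl L x + Sl M x"
  by (simp add: Sl_def)

lemma Wl_append: "Wl (L @ M) x y = Wl L x y + Wl M x y + Sl L x * Sl M y - Sl L y * Sl M x"
  by (induction L) (simp_all add: algebra_simps)

lemma Sl_rotate1[simp]: "Sl (rotate1 L) x = Sl L x"
  by (cases L) (simp_all add: add.commute)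

lemma Sl_rotate[simp]: "Sl (rotate n L) x = Sl L x"
  by (induction n) simp_all

lemma Wl_rotate1_Cons: "Wl (rotate1 (h # T)) x y = Wl (h # T) x y + 2 * (Sl (h # T) x * pe h y - Sl (h # T) y * pe h x)"
  by (simp add: Wl_append algebra_simps)

lemma Sl_zero: "(\<And>h. h \<in> set L \<Longrightarrow> pe h x = 0) \<Longrightarrow> Sl L x = 0"
  by (induction L) auto

lemma Wl_zero: "(\<And>h. h \<in> set L \<Longrightarrow> pe h x = 0) \<Longrightarrow> Wl L x y = 0"
  by (induction L) (auto simp: Sl_zero)

lemma Sl_filter: "(\<And>h. h \<in> set L \<Longrightarrow> \<not> P h \<Longrightarrow> pe h x = 0) \<Longrightarrow> Sl (filter P L) x = Sl L x"
  by (induction L) auto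

lemma Wl_filter: "(\<And>h. h \<in> set L \<Longrightarrow> \<not> P h \<Longrightarrow> pe h x = 0 \<and> pe h y = 0) \<Longrightarrow> Wl (filter P L) x y = Wl L x y"
  by (induction L) (auto simp: Sl_filter)

lemma eps_pe: "eps rot v x i = (if i < length (rot v) then pe (rot v ! i) x else 0)"
  by (cases "rot v ! i") (auto simp: eps_def pe_def)

lemma sum_pe_nth: "(\<Sum>i<length L. pe (L ! i) x) = Sl L x"
proof (induction L)
  case Nil then show ?case by simp
next
  case (Cons h L) then show ?case by (simp del: sum.lessThan_Suc add: sum.lessThan_Suc_shift)
qed

lemma incid_Sl: "incid rot v x = Sl (rot v) x"
  unfolding incid_def eps_pe using sum_pe_nth[of "rot v" x] by simp

lemma dsum_Wl:
  "(\<Sum>i<length L. \<Sum>j<length L. sgn (real j - real i) * pe (L ! i) x * pe (L ! j) y) = Wl L x y"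
proof (induction L)
  case Nil then show ?case by simp
next
  case (Cons h L)
  have a: "(\<Sum>j<length L. sgn (real (Suc j) - real 0) * pe h x * pe (L ! j) y) = pe h x * Sl L y"
    by (simp add: sum_distrib_left[symmetric] sum_pe_nth)
  have b: "(\<Sum>i<length L. sgn (real 0 - real (Suc i)) * pe (L ! i) x * pe h y) = - (pe h y * Sl L x)"
  proof -
    have "(\<Sum>i<length L. sgn (real 0 - real (Suc i)) * pe (L ! i) x * pe h y) = - (\<Sum>i<length L. pe h y * pe (L ! i) x)"
      by (simp add: sum_negf mult.commute)
    also have "\<dots> = - (pe h y * Sl L x)" by (simp add: sum_distrib_left[symmetric] sum_pe_nth)
    finally show ?thesis .
  qed
  have c: "sgn (real (Suc j) - real (Suc i)) = sgn (real j - real i)" for i j :: nat by simp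
  show ?case
    by (simp add: sum.lessThan_Suc_shift sum_subtractf Cons.IH sum_distrib_left[symmetric] sum_distrib_right[symmetric] sum_pe_nth del: sum.lessThan_Suc)
qed

lemma fcoef_Wl: "fcoef \<theta> V rot x y = - (\<theta> / 4) * (\<Sum>v\<in>V. Wl (rot v) x y)"
  unfolding fcoef_def eps_pe
proof -
  have "(\<Sum>i<length (rot v). \<Sum>j<length (rot v). sgn (real j - real i) *
          (if i < length (rot v) then pe (rot v ! i) x else 0) * (if j < length (rot v) then pe (rot v ! j) y else 0))
      = Wl (rot v) x y" for v
    using dsum_Wl[of "rot v" x y] by simp
  then show "- (\<theta> / 4) * (\<Sum>v\<in>V. \<Sum>i<length (rot v). \<Sum>j<length (rot v). sgn (real j - real i) *
          (if i < length (rot v) then pe (rot v ! i) x else 0) * (if j < length (rot v) then pe (rot v ! j) y else 0))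
      = - (\<theta> / 4) * (\<Sum>v\<in>V. Wl (rot v) x y)" by simp
qed



lemma Midx_iff: "x \<in> Midx E V r \<longleftrightarrow> (case x of Inl p \<Rightarrow> p \<in> E | Inr w \<Rightarrow> w \<in> V \<and> w \<noteq> r)"
  by (cases x) (auto simp: Midx_def)

lemma finite_Midx: "finite E \<Longrightarrow> finite V \<Longrightarrow> finite (Midx E V r)"
  by (simp add: Midx_def)

lemma Mmat_simps[simp]:
  "Mmat \<theta> \<alpha> V rot (Inl p) (Inl q) = (if p = q then \<alpha> p else fcoef \<theta> V rot p q)"
  "Mmat \<theta> \<alpha> V rot (Inl p) (Inr w) = - Sl (rot w) p"
  "Mmat \<theta> \<alpha> V rot (Inr w) (Inl q) = Sl (rot w) q"
  "Mmat \<theta> \<alpha> V rot (Inr w) (Inr u) = 0"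
  by (simp_all add: Mmat_def incid_Sl)

lemma Mmat_inv1:
  fixes V :: "'v set" and E :: "'e set" and rot :: "'v \<Rightarrow> ('e \<times> bool) list"
  assumes finV: "finite V" and finE: "finite E" and r: "r \<in> V" and v: "v \<in> V"
    and bal: "\<And>x. x \<in> E \<Longrightarrow> (\<Sum>w\<in>V. Sl (rot w) x) = 0"
  shows "det_on (Midx E V r) (Mmat \<theta> \<alpha> V (rot(v := rotate1 (rot v)))) = det_on (Midx E V r) (Mmat \<theta> \<alpha> V rot)"
proof (cases "rot v")
  case Nil
  then have "rot(v := rotate1 (rot v)) = rot" by auto
  then show ?thesis by simp
next
  case (Cons h T)
  let ?I = "Midx E V r"
  let ?rot2 = "rot(v := rotate1 (rot v))"
  let ?M = "Mmat \<theta> \<alpha> V rot"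
  let ?M2 = "Mmat \<theta> \<alpha> V ?rot2"
  define \<gamma> where "\<gamma> w = (if v = r then -1 else if w = v then 1 else (0::real))" for w
  have gam: "(\<Sum>w\<in>V - {r}. \<gamma> w * Sl (rot w) q) = Sl (rot v) q" if q: "q \<in> E" for q
  proof (cases "v = r")
    case True
    have "(\<Sum>w\<in>V. Sl (rot w) q) = Sl (rot r) q + (\<Sum>w\<in>V - {r}. Sl (rot w) q)"
      by (rule sum.remove[OF finV r])
    then show ?thesis using bal[OF q] True by (simp add: \<gamma>_def sum_negf)
  next
    case False
    then have "v \<in> V - {r}" using v by simp
    then show ?thesis using False finV by (simp add: \<gamma>_def if_distrib[of "\<lambda>z. z * _"] sum.delta cong: if_cong)
  qed
  define K :: "('e + 'v) set" where "K = Inr ` (V - {r})"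
  have KI: "K \<subseteq> ?I" by (auto simp: K_def Midx_def)
  define c :: "'e + 'v \<Rightarrow> 'e + 'v \<Rightarrow> real" where "c x k = (case x of Inl p \<Rightarrow> (case k of Inr w \<Rightarrow> (\<theta>/2) * pe h p * \<gamma> w | Inl _ \<Rightarrow> 0) | Inr _ \<Rightarrow> 0)" for x k
  define c' :: "'e + 'v \<Rightarrow> 'e + 'v \<Rightarrow> real" where "c' y k = (case y of Inl q \<Rightarrow> (case k of Inr w \<Rightarrow> (\<theta>/2) * pe h q * \<gamma> w | Inl _ \<Rightarrow> 0) | Inr _ \<Rightarrow> 0)" for y k
  have rowsum: "(\<Sum>k\<in>K. c (Inl p) k * ?M k (Inl q)) = (\<theta>/2) * pe h p * Sl (rot v) q" if "q \<in> E" for p q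
  proof -
    have "(\<Sum>k\<in>K. c (Inl p) k * ?M k (Inl q)) = (\<Sum>w\<in>V - {r}. (\<theta>/2) * pe h p * (\<gamma> w * Sl (rot w) q))"
      unfolding K_def by (subst sum.reindex) (auto simp: inj_on_def c_def mult.assoc)
    also have "\<dots> = ((\<theta>/2) * pe h p) * (\<Sum>w\<in>V - {r}. \<gamma> w * Sl (rot w) q)" by (rule sum_distrib_left[symmetric])
    also have "\<dots> = (\<theta>/2) * pe h p * Sl (rot v) q" by (simp add: gam[OF that])
    finally show ?thesis .
  qed
  have colsum: "(\<Sum>k\<in>K. c' (Inl q) k * ?M (Inl p) k) = - ((\<theta>/2) * pe h q * Sl (rot v) p)" if "p \<in> E" for p q
  proof -
    have "(\<Sum>k\<in>K. c' (Inl q) k * ?M (Inl p) k) = (\<Sum>w\<in>V - {r}. - ((\<theta>/2) * pe h q * (\<gamma> w * Sl (rot w) p)))"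
      unfolding K_def by (subst sum.reindex) (auto simp: inj_on_def c'_def mult.assoc)
    also have "\<dots> = - (((\<theta>/2) * pe h q) * (\<Sum>w\<in>V - {r}. \<gamma> w * Sl (rot w) p))" by (simp add: sum_negf sum_distrib_left)
    also have "\<dots> = - ((\<theta>/2) * pe h q * Sl (rot v) p)" by (simp add: gam[OF that])
    finally show ?thesis .
  qed
  have rowsum0: "(\<Sum>k\<in>K. c x k * ?M k (Inr u)) = 0" for x u
    unfolding K_def by (subst sum.reindex) (auto simp: inj_on_def)
  have colsum0': "(\<Sum>k\<in>K. c' y k * ?M (Inr u) k) = 0" for y u
    unfolding K_def by (subst sum.reindex) (auto simp: inj_on_def)
  have colsum0: "(\<Sum>k\<in>K. c' (Inr u) k * ?M x k) = 0" for x u by (simp add: c'_def)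
  have rowsum1: "(\<Sum>k\<in>K. c (Inr u) k * ?M k y) = 0" for y u by (simp add: c_def)
  have Sl2: "Sl (?rot2 w) x = Sl (rot w) x" for w x by simp
  have W2: "(\<Sum>w\<in>V. Wl (?rot2 w) p q) = (\<Sum>w\<in>V. Wl (rot w) p q) + 2 * (Sl (rot v) p * pe h q - Sl (rot v) q * pe h p)" for p q
  proof -
    have "(\<Sum>w\<in>V. Wl (?rot2 w) p q) = Wl (?rot2 v) p q + (\<Sum>w\<in>V - {v}. Wl (?rot2 w) p q)"
      by (rule sum.remove[OF finV v])
    also have "(\<Sum>w\<in>V - {v}. Wl (?rot2 w) p q) = (\<Sum>w\<in>V - {v}. Wl (rot w) p q)"
      by (rule sum.cong) auto
    also have "Wl (?rot2 v) p q = Wl (rot v) p q + 2 * (Sl (rot v) p * pe h q - Sl (rot v) q * pe h p)"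
      using Wl_rotate1_Cons[of h T p q] Cons by simp
    also have "(\<Sum>w\<in>V. Wl (rot w) p q) = Wl (rot v) p q + (\<Sum>w\<in>V - {v}. Wl (rot w) p q)"
      by (rule sum.remove[OF finV v])
    ultimately show ?thesis by simp
  qed
  have "det_on ?I ?M2 = det_on ?I (\<lambda>x y. ?M x y + (\<Sum>k\<in>K. c x k * ?M k y) + (\<Sum>k\<in>K. c' y k * ?M x k))"
  proof (rule det_on_cong)
    fix x y assume xI: "x \<in> ?I" and yI: "y \<in> ?I"
    show "?M2 x y = ?M x y + (\<Sum>k\<in>K. c x k * ?M k y) + (\<Sum>k\<in>K. c' y k * ?M x k)"
    proof (cases x)
      case (Inl p)
      note xp = Inl
      show ?thesis
      proof (cases y)
        case (Inl q)
        have pE: "p \<in> E" and qE: "q \<in> E" using xI yI xp Inl by (auto simp: Midx_def)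
        show ?thesis
        proof (cases "p = q")
          case True
          then show ?thesis unfolding xp Inl using rowsum[OF qE, of p] colsum[OF pE, of q] by simp
        next
          case False
          have e1: "?M2 (Inl p) (Inl q) = -(\<theta>/4) * ((\<Sum>w\<in>V. Wl (rot w) p q) + 2*(Sl (rot v) p * pe h q - Sl (rot v) q * pe h p))"
            using False W2[of p q] by (simp only: Mmat_simps fcoef_Wl if_False)
          have e2: "?M (Inl p) (Inl q) = -(\<theta>/4) * (\<Sum>w\<in>V. Wl (rot w) p q)"
            using False by (simp only: Mmat_simps fcoef_Wl if_False)
          show ?thesis unfolding xp Inl e1 e2 rowsum[OF qE, of p] colsum[OF pE, of q]
            by (simp add: algebra_simps)
        qed
      next
        case (Inr u)
        then show ?thesis using xp rowsum0[of x u] by (simp add: c'_def)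
      qed
    next
      case (Inr u)
      note xu = Inr
      show ?thesis
      proof (cases y)
        case (Inl q)
        then show ?thesis using xu rowsum1[of u y] colsum0'[of y u] by simp
      next
        case (Inr u')
        then show ?thesis using xu by (simp add: c_def c'_def)
      qed
    qed
  qed
  also have "\<dots> = det_on ?I ?M"
    by (rule det_on_rowcol_add[OF finite_Midx[OF finE finV] KI])
       (auto simp: K_def c_def c'_def)
  finally show ?thesis .
qed



lemma Mmat_cong_rot:
  assumes "\<And>w. w \<in> V \<Longrightarrow> rot2 w = rot w"
  shows "det_on (Midx E V r) (Mmat \<theta> \<alpha> V rot2) = det_on (Midx E V r) (Mmat \<theta> \<alpha> V rot)"
proof (rule det_on_cong)
  fix x y assume x: "x \<in> Midx E V r" and y: "y \<in> Midx E V r"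
  have f: "fcoef \<theta> V rot2 p q = fcoef \<theta> V rot p q" for p q
    unfolding fcoef_Wl using assms by simp
  show "Mmat \<theta> \<alpha> V rot2 x y = Mmat \<theta> \<alpha> V rot x y"
    using x y assms by (cases x; cases y) (auto simp: Midx_def f)
qed

lemma Mmat_invn:
  fixes V :: "'v set" and E :: "'e set" and rot :: "'v \<Rightarrow> ('e \<times> bool) list"
  assumes finV: "finite V" and finE: "finite E" and r: "r \<in> V" and v: "v \<in> V"
    and bal: "\<And>x. x \<in> E \<Longrightarrow> (\<Sum>w\<in>V. Sl (rot w) x) = 0"
  shows "det_on (Midx E V r) (Mmat \<theta> \<alpha> V (rot(v := rotate n (rot v)))) = det_on (Midx E V r) (Mmat \<theta> \<alpha> V rot)"
proof (induction n)
  case 0 then show ?case by simp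
next
  case (Suc n)
  let ?R = "rot(v := rotate n (rot v))"
  have SlR: "Sl (?R w) x = Sl (rot w) x" for w x by simp
  have eq: "rot(v := rotate (Suc n) (rot v)) = ?R(v := rotate1 (?R v))" by simp
  have balR: "(\<Sum>w\<in>V. Sl (?R w) x) = 0" if "x \<in> E" for x using bal[OF that] by (simp only: SlR)
  have "det_on (Midx E V r) (Mmat \<theta> \<alpha> V (?R(v := rotate1 (?R v)))) = det_on (Midx E V r) (Mmat \<theta> \<alpha> V ?R)"
    by (rule Mmat_inv1[OF finV finE r v balR])
  then show ?case unfolding eq using Suc.IH by (rule trans)
qed

lemma Mmat_inv_all:
  fixes V :: "'v set" and E :: "'e set" and rot rot2 :: "'v \<Rightarrow> ('e \<times> bool) list"
  assumes finV: "finite V" and finE: "finite E" and r: "r \<in> V"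
    and bal: "\<And>x. x \<in> E \<Longrightarrow> (\<Sum>w\<in>V. Sl (rot w) x) = 0"
    and rt: "\<And>w. w \<in> V \<Longrightarrow> \<exists>n. rot2 w = rotate n (rot w)"
  shows "det_on (Midx E V r) (Mmat \<theta> \<alpha> V rot2) = det_on (Midx E V r) (Mmat \<theta> \<alpha> V rot)"
proof -
  define n where "n w = (SOME n. rot2 w = rotate n (rot w))" for w
  have n: "rot2 w = rotate (n w) (rot w)" if "w \<in> V" for w
    unfolding n_def using someI_ex[OF rt[OF that]] .
  define R where "R U = (\<lambda>w. if w \<in> U then rotate (n w) (rot w) else rot w)" for U
  have SlR: "Sl (R U w) x = Sl (rot w) x" for U w x by (simp add: R_def)
  have gen: "finite U \<Longrightarrow> U \<subseteq> V \<Longrightarrow> det_on (Midx E V r) (Mmat \<theta> \<alpha> V (R U)) = det_on (Midx E V r) (Mmat \<theta> \<alpha> V rot)" for U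
  proof (induction U rule: finite_induct)
    case empty
    have "R {} = rot" by (simp add: R_def)
    then show ?case by simp
  next
    case (insert u U)
    have "R (insert u U) = (R U)(u := rotate (n u) (R U u))"
      using insert(2) by (auto simp: R_def)
    note eq = this
    have balR: "(\<Sum>w\<in>V. Sl (R U w) x) = 0" if "x \<in> E" for x using bal[OF that] by (simp only: SlR)
    have "det_on (Midx E V r) (Mmat \<theta> \<alpha> V ((R U)(u := rotate (n u) (R U u))))
        = det_on (Midx E V r) (Mmat \<theta> \<alpha> V (R U))"
      by (rule Mmat_invn[OF finV finE r _ balR]) (use insert in auto)
    moreover have "det_on (Midx E V r) (Mmat \<theta> \<alpha> V (R U)) = det_on (Midx E V r) (Mmat \<theta> \<alpha> V rot)"
      using insert.IH insert.prems by simp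
    ultimately show ?case unfolding eq by (rule trans)
  qed
  have "det_on (Midx E V r) (Mmat \<theta> \<alpha> V rot2) = det_on (Midx E V r) (Mmat \<theta> \<alpha> V (R V))"
    by (rule Mmat_cong_rot) (simp add: R_def n)
  also have "\<dots> = det_on (Midx E V r) (Mmat \<theta> \<alpha> V rot)" using gen[OF finV] by simp
  finally show ?thesis .
qed

lemma rotate_back: "\<exists>m. xs = rotate m (rotate n xs)"
proof (cases "xs = []")
  case True then show ?thesis by simp
next
  case False
  then have l: "length xs > 0" by simp
  have "(length xs - n mod length xs + n) mod length xs = 0"
    using l by (metis add.commute le_add_diff_inverse less_imp_le mod_add_right_eq mod_less_divisor mod_self)
  then have "rotate (length xs - n mod length xs) (rotate n xs) = xs"
    by (simp add: rotate_rotate)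
  then show ?thesis by metis
qed

lemma filter_rotate1_ex: "\<exists>m. filter P (rotate1 xs) = rotate m (filter P xs)"
proof (cases xs)
  case Nil then show ?thesis by (metis rotate0 id_apply filter.simps(1) rotate1.simps(1))
next
  case (Cons h t)
  show ?thesis
  proof (cases "P h")
    case True
    then have "filter P (rotate1 xs) = rotate1 (filter P xs)" using Cons by simp
    then show ?thesis by (metis One_nat_def rotate_Suc rotate0 id_apply)
  next
    case False
    then have "filter P (rotate1 xs) = rotate 0 (filter P xs)" using Cons by simp
    then show ?thesis by blast
  qed
qed

lemma filter_rotate_ex: "\<exists>m. filter P (rotate n xs) = rotate m (filter P xs)"
proof (induction n)
  case 0 then show ?case by (metis rotate0 id_apply)
next
  case (Suc n)
  then obtain m where m: "filter P (rotate n xs) = rotate m (filter P xs)" by blast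
  obtain k where k: "filter P (rotate1 (rotate n xs)) = rotate k (filter P (rotate n xs))"
    using filter_rotate1_ex by blast
  show ?case using m k by (simp add: rotate_rotate) blast
qed



lemma Wl_antisym: "Wl L x y = - Wl L y x"
  by (induction L) (simp_all add: algebra_simps)

lemma Sl_set: "distinct L \<Longrightarrow> Sl L x = (if (x, True) \<in> set L then 1 else 0) - (if (x, False) \<in> set L then 1 else 0)"
proof -
  assume d: "distinct L"
  have pe: "pe h x = (if h = (x, True) then 1 else 0) - (if h = (x, False) then 1 else 0)" for h
    by (cases h) (auto simp: pe_def)
  have "Sl L x = (\<Sum>h\<in>set L. pe h x)" unfolding Sl_def using d by (simp add: sum_list_distinct_conv_sum_set)
  also have "\<dots> = (\<Sum>h\<in>set L. (if h = (x, True) then 1 else 0)) - (\<Sum>h\<in>set L. (if h = (x, False) then 1 else 0))"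
    unfolding pe by (simp add: sum_subtractf)
  also have "\<dots> = (if (x, True) \<in> set L then 1 else 0) - (if (x, False) \<in> set L then 1 else 0)"
    by (simp add: sum.delta')
  finally show ?thesis .
qed

lemma wf_Sl:
  assumes wf: "ribbon_wf V E src tgt rot" and v: "v \<in> V" and x: "x \<in> E"
  shows "Sl (rot v) x = (if src x = v then 1 else 0) - (if tgt x = v then 1 else 0)"
proof -
  have d: "distinct (rot v)" and s: "set (rot v) = {(e, True) | e. e \<in> E \<and> src e = v} \<union> {(e, False) | e. e \<in> E \<and> tgt e = v}"
    using wf v by (auto simp: ribbon_wf_def)
  show ?thesis unfolding Sl_set[OF d] s using x by auto
qed

lemma wf_bal:
  assumes wf: "ribbon_wf V E src tgt rot" and x: "x \<in> E"
  shows "(\<Sum>v\<in>V. Sl (rot v) x) = 0"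
proof -
  have fin: "finite V" and st: "src x \<in> V" "tgt x \<in> V" using wf x by (auto simp: ribbon_wf_def)
  have "(\<Sum>v\<in>V. Sl (rot v) x) = (\<Sum>v\<in>V. (if src x = v then 1 else 0) - (if tgt x = v then 1 else 0))"
    by (rule sum.cong) (auto simp: wf_Sl[OF wf _ x])
  also have "\<dots> = 0" using fin st by (simp add: sum_subtractf sum.delta)
  finally show ?thesis .
qed

lemma cut_after_rotate:
  assumes xL: "h \<in> set L" and fh: "fst h = e" and uniq: "\<And>y. y \<in> set L \<Longrightarrow> fst y = e \<Longrightarrow> y = h"
    and dL: "distinct L"
  shows "\<exists>i. rotate i L = h # cut_after e L" and "\<And>y. y \<in> set (cut_after e L) \<Longrightarrow> fst y \<noteq> e"
proof -
  define i where "i = length (takeWhile (\<lambda>h. fst h \<noteq> e) L)"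
  have il: "i < length L"
  proof (rule ccontr)
    assume "\<not> i < length L"
    then have "takeWhile (\<lambda>h. fst h \<noteq> e) L = L" unfolding i_def
      by (metis length_takeWhile_le nat_less_le takeWhile_eq_take take_all)
    then have "\<forall>y\<in>set L. fst y \<noteq> e" by (metis set_takeWhileD)
    then show False using xL fh by blast
  qed
  have "fst (L ! i) = e" unfolding i_def using il[unfolded i_def] nth_length_takeWhile by blast
  then have Li: "L ! i = h" using uniq il by simp
  have rot: "rotate i L = h # cut_after e L"
    using il Li unfolding cut_after_def i_def[symmetric] Let_def
    by (simp add: rotate_drop_take Cons_nth_drop_Suc[symmetric])
  then show "\<exists>i. rotate i L = h # cut_after e L" by blast
  fix y assume y: "y \<in> set (cut_after e L)"
  have "distinct (h # cut_after e L)" using dL rot by (metis distinct_rotate)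
  then have "y \<noteq> h" using y by auto
  moreover have "y \<in> set L" using y rot by (metis list.set_intros(2) set_rotate)
  ultimately show "fst y \<noteq> e" using uniq by blast
qed

lemma Midx_minus1: "Midx E V r - {Inl e} = Midx (E - {e}) V r"
  by (auto simp: Midx_def)

lemma Midx_minus2: "Midx E V r - {Inl e, Inr d} = Midx (E - {e}) (V - {d}) r"
  by (auto simp: Midx_def)



lemma Mmat_filter_cong:
  "det_on (Midx (E - {e}) V r) (Mmat \<theta> \<alpha> V R)
   = det_on (Midx (E - {e}) V r) (Mmat \<theta> \<alpha> V (\<lambda>v. filter (\<lambda>h. fst h \<noteq> e) (R v)))"
proof (rule det_on_cong)
  fix x y assume x: "x \<in> Midx (E - {e}) V r" and y: "y \<in> Midx (E - {e}) V r"
  have peh: "pe h p = 0" if "\<not> fst h \<noteq> e" "p \<noteq> e" for h p using that by (auto simp: pe_def)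
  have S: "Sl (filter (\<lambda>h. fst h \<noteq> e) L) p = Sl L p" if "p \<noteq> e" for L p
    by (rule Sl_filter) (use peh that in auto)
  have W: "Wl (filter (\<lambda>h. fst h \<noteq> e) L) p q = Wl L p q" if "p \<noteq> e" "q \<noteq> e" for L p q
    by (rule Wl_filter) (use peh that in auto)
  show "Mmat \<theta> \<alpha> V R x y = Mmat \<theta> \<alpha> V (\<lambda>v. filter (\<lambda>h. fst h \<noteq> e) (R v)) x y"
  proof (cases x; cases y)
    fix p q assume "x = Inl p" "y = Inl q"
    moreover have "p \<noteq> e" "q \<noteq> e" using x y calculation by (auto simp: Midx_def)
    ultimately show ?thesis by (simp add: W fcoef_Wl)
  next
    fix p q assume "x = Inl p" "y = Inr q"
    moreover have "p \<noteq> e" using x calculation by (auto simp: Midx_def)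
    ultimately show ?thesis by (simp add: S)
  next
    fix p q assume "x = Inr p" "y = Inl q"
    moreover have "q \<noteq> e" using y calculation by (auto simp: Midx_def)
    ultimately show ?thesis by (simp add: S)
  next
    fix p q assume "x = Inr p" "y = Inr q"
    then show ?thesis by simp
  qed
qed

lemma sum_split2:
  assumes "finite V" "a \<in> V" "b \<in> V" "a \<noteq> b"
  shows "(\<Sum>v\<in>V. g v) = g a + g b + (\<Sum>v\<in>V - {a, b}. (g v :: real))"
proof -
  have "(\<Sum>v\<in>V. g v) = g a + (\<Sum>v\<in>V - {a}. g v)" by (rule sum.remove[OF assms(1,2)])
  also have "(\<Sum>v\<in>V - {a}. g v) = g b + (\<Sum>v\<in>V - {a} - {b}. g v)"
    by (rule sum.remove) (use assms in auto)
  also have "V - {a} - {b} = V - {a, b}" by auto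
  finally show ?thesis by simp
qed



theorem theorem5p1:
  fixes V :: "'v set" and E :: "'e set" and src tgt :: "'e \<Rightarrow> 'v"
    and rot rotD rotC :: "'v \<Rightarrow> ('e \<times> bool) list"
    and r :: 'v and e :: 'e and \<theta> :: real and \<alpha> :: "'e \<Rightarrow> real"
  assumes wf: "ribbon_wf V E src tgt rot"
    and root: "r \<in> V"
    and conn: "graph_connected V E src tgt"
    and theta: "\<theta> > 0"
    and edge: "e \<in> E" "src e \<noteq> tgt e"
    and connD: "graph_connected V (E - {e}) src tgt"
    and delD: "\<forall>v\<in>V. cyc_compat (rotD v) (filter (\<lambda>h. fst h \<noteq> e) (rot v))"
    and contrC_merged: "cyc_compat (rotC (keepv src tgt r e)) (merged_rot src tgt rot e)"
    and contrC_other: "\<forall>v\<in>V - {src e, tgt e}. cyc_compat (rotC v) (rot v)"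
  shows "det_on (Midx E V r) (Mmat \<theta> \<alpha> V rot)
         = \<alpha> e * det_on (Midx (E - {e}) V r) (Mmat \<theta> \<alpha> V rotD)
           + det_on (Midx (E - {e}) (V - {dropv src tgt r e}) r)
                    (Mmat \<theta> \<alpha> (V - {dropv src tgt r e}) rotC)"
proof -
  define a where "a = src e"
  define b where "b = tgt e"
  have ab: "a \<noteq> b" using edge by (simp add: a_def b_def)
  have finV: "finite V" and finE: "finite E" using wf by (auto simp: ribbon_wf_def)
  have aV: "a \<in> V" and bV: "b \<in> V" using wf edge by (auto simp: ribbon_wf_def a_def b_def)
  have dist: "distinct (rot v)" if "v \<in> V" for v using wf that by (auto simp: ribbon_wf_def)
  have setrot: "set (rot v) = {(x, True) | x. x \<in> E \<and> src x = v} \<union> {(x, False) | x. x \<in> E \<and> tgt x = v}"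
    if "v \<in> V" for v using wf that by (auto simp: ribbon_wf_def)
  have bal: "(\<Sum>v\<in>V. Sl (rot v) x) = 0" if "x \<in> E" for x by (rule wf_bal[OF wf that])
  have sa: "src e = a" and tb: "tgt e = b" by (simp_all add: a_def b_def)
  have noe: "fst h \<noteq> e" if "v \<in> V" "v \<noteq> a" "v \<noteq> b" "h \<in> set (rot v)" for v h
  proof -
    have "h \<in> {(x, True) | x. x \<in> E \<and> src x = v} \<union> {(x, False) | x. x \<in> E \<and> tgt x = v}"
      using that(4) setrot[OF that(1)] by blast
    then show ?thesis using that(2,3) sa tb by auto
  qed
  have pe0: "pe h x = 0" if "fst h \<noteq> x" for h x using that by (simp add: pe_def)
  define A where "A = cut_after e (rot a)"
  define B where "B = cut_after e (rot b)"
  have ina: "(e, True) \<in> set (rot a)"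
  proof -
    have "(e, True) \<in> {(x, True) | x. x \<in> E \<and> src x = a}" using edge(1) sa by blast
    then show ?thesis using setrot[OF aV] by blast
  qed
  have una: "y = (e, True)" if "y \<in> set (rot a)" "fst y = e" for y
  proof -
    have "y \<in> {(x, True) | x. x \<in> E \<and> src x = a} \<union> {(x, False) | x. x \<in> E \<and> tgt x = a}"
      using that(1) setrot[OF aV] by blast
    then show ?thesis using that(2) tb ab by auto
  qed
  have inb: "(e, False) \<in> set (rot b)"
  proof -
    have "(e, False) \<in> {(x, False) | x. x \<in> E \<and> tgt x = b}" using edge(1) tb by blast
    then show ?thesis using setrot[OF bV] by blast
  qed
  have unb: "y = (e, False)" if "y \<in> set (rot b)" "fst y = e" for y
  proof -
    have "y \<in> {(x, True) | x. x \<in> E \<and> src x = b} \<union> {(x, False) | x. x \<in> E \<and> tgt x = b}"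
      using that(1) setrot[OF bV] by blast
    then show ?thesis using that(2) sa ab by auto
  qed
  obtain ia where ia: "rotate ia (rot a) = (e, True) # A"
    using cut_after_rotate(1)[OF ina _ una dist[OF aV]] unfolding A_def by auto
  have Ae: "fst y \<noteq> e" if "y \<in> set A" for y
    using cut_after_rotate(2)[OF ina _ una dist[OF aV]] that unfolding A_def by auto
  obtain ib where ib: "rotate ib (rot b) = (e, False) # B"
    using cut_after_rotate(1)[OF inb _ unb dist[OF bV]] unfolding B_def by auto
  have Be: "fst y \<noteq> e" if "y \<in> set B" for y
    using cut_after_rotate(2)[OF inb _ unb dist[OF bV]] that unfolding B_def by auto
  have SAe: "Sl A e = 0" by (rule Sl_zero, rule pe0, erule Ae)
  have SBe: "Sl B e = 0" by (rule Sl_zero, rule pe0, erule Be)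
  have WAe: "Wl A e q = 0" for q by (rule Wl_zero, rule pe0, erule Ae)
  have WBe: "Wl B e q = 0" for q by (rule Wl_zero, rule pe0, erule Be)
  define rot' where "rot' = rot(a := (e, True) # A, b := (e, False) # B)"
  have rot'a: "rot' a = (e, True) # A" and rot'b: "rot' b = (e, False) # B"
    using ab by (simp_all add: rot'_def)
  have rot'o: "rot' v = rot v" if "v \<noteq> a" "v \<noteq> b" for v using that by (simp add: rot'_def)
  have rot'rt: "\<exists>n. rot' w = rotate n (rot w)" if "w \<in> V" for w
  proof -
    consider "w = a" | "w = b" | "w \<noteq> a" "w \<noteq> b" by blast
    then show ?thesis
    proof cases
      case 1 then show ?thesis using ia rot'a by metis
    next
      case 2 then show ?thesis using ib rot'b by metis
    next
      case 3 then show ?thesis using rot'o[OF 3] by (metis rotate0 id_apply)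
    qed
  qed
  have Slrot': "Sl (rot' w) x = Sl (rot w) x" if "w \<in> V" for w x
    using rot'rt[OF that] by auto
  have step1: "det_on (Midx E V r) (Mmat \<theta> \<alpha> V rot') = det_on (Midx E V r) (Mmat \<theta> \<alpha> V rot)"
    by (rule Mmat_inv_all[OF finV finE root bal rot'rt])
  let ?I = "Midx E V r"
  let ?M' = "Mmat \<theta> \<alpha> V rot'"
  have finI: "finite ?I" by (rule finite_Midx[OF finE finV])
  have eI: "Inl e \<in> ?I" using edge by (simp add: Midx_def)
  define M0 where "M0 = (\<lambda>x y. if x = Inl e \<and> y = Inl e then 0 else ?M' x y)"
  have split: "det_on ?I ?M' = \<alpha> e * det_on (Midx (E - {e}) V r) ?M' + det_on ?I M0"
    using det_on_split_diag[OF finI eI, of ?M'] by (simp add: Midx_minus1 M0_def)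
  define rotD' where "rotD' v = filter (\<lambda>h. fst h \<noteq> e) (rot' v)" for v
  have D1: "det_on (Midx (E - {e}) V r) ?M' = det_on (Midx (E - {e}) V r) (Mmat \<theta> \<alpha> V rotD')"
    unfolding rotD'_def by (rule Mmat_filter_cong)
  have balD: "(\<Sum>v\<in>V. Sl (rotD' v) x) = 0" if "x \<in> E - {e}" for x
  proof -
    have "(\<Sum>v\<in>V. Sl (rotD' v) x) = (\<Sum>v\<in>V. Sl (rot v) x)"
    proof (rule sum.cong[OF refl])
      fix v assume v: "v \<in> V"
      have "Sl (rotD' v) x = Sl (rot' v) x" unfolding rotD'_def
        by (rule Sl_filter) (use that in \<open>auto simp: pe_def\<close>)
      then show "Sl (rotD' v) x = Sl (rot v) x" using Slrot'[OF v] by simp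
    qed
    then show ?thesis using bal that by simp
  qed
  have rtD: "\<exists>n. rotD w = rotate n (rotD' w)" if w: "w \<in> V" for w
  proof -
    let ?P = "\<lambda>h. fst h \<noteq> e"
    obtain m where m: "rotD w = rotate m (filter ?P (rot w))" using delD w by (auto simp: cyc_compat_def)
    obtain j where j: "rot' w = rotate j (rot w)" using rot'rt[OF w] by blast
    obtain m' where m': "filter ?P (rotate j (rot w)) = rotate m' (filter ?P (rot w))"
      using filter_rotate_ex by blast
    obtain m'' where m'': "filter ?P (rot w) = rotate m'' (rotate m' (filter ?P (rot w)))"
      using rotate_back by blast
    have "rotD w = rotate m (rotate m'' (rotD' w))" unfolding rotD'_def j m' using m m'' by metis
    then show ?thesis by (metis rotate_rotate)
  qed
  have D2: "det_on (Midx (E - {e}) V r) (Mmat \<theta> \<alpha> V rotD) = det_on (Midx (E - {e}) V r) (Mmat \<theta> \<alpha> V rotD')"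
    by (rule Mmat_inv_all[OF finV finite_Diff[OF finE] root balD rtD])
  define d where "d = dropv src tgt r e"
  define k where "k = keepv src tgt r e"
  have dk: "(d = a \<and> k = b \<and> b = r) \<or> (d = b \<and> k = a \<and> b \<noteq> r)"
    by (auto simp: d_def k_def dropv_def keepv_def a_def b_def)
  have dV: "d \<in> V" and kV: "k \<in> V" and dr: "d \<noteq> r" and kd: "k \<noteq> d"
    using dk aV bV ab by auto
  have pee: "pe (e, s) e = (if s then 1 else -1)" for s by (simp add: pe_def)
  have pex: "pe (e, s) x = 0" if "x \<noteq> e" for s x using that by (simp add: pe_def)
  have Slae: "Sl (rot' a) e = 1" using rot'a SAe by (simp add: pee)
  have Slbe: "Sl (rot' b) e = -1" using rot'b SBe by (simp add: pee)
  have Sloe: "Sl (rot' v) e = 0" if "v \<in> V" "v \<noteq> a" "v \<noteq> b" for v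
  proof -
    have "Sl (rot v) e = 0" by (rule Sl_zero, rule pe0, erule noe[OF that])
    then show ?thesis using rot'o[OF that(2,3)] by simp
  qed
  have Slap: "Sl (rot' a) p = Sl A p" if "p \<noteq> e" for p using rot'a pex[OF that] by simp
  have Slbp: "Sl (rot' b) p = Sl B p" if "p \<noteq> e" for p using rot'b pex[OF that] by simp
  define \<sigma> where "\<sigma> = Sl (rot' d) e"
  have \<sigma>v: "\<sigma> = (if d = a then 1 else -1)" using dk Slae Slbe ab by (auto simp: \<sigma>_def)
  have Slke: "Sl (rot' k) e = - \<sigma>" using dk Slae Slbe ab by (auto simp: \<sigma>_def)
  have \<sigma>0: "\<sigma> \<noteq> 0" using \<sigma>v by simp
  have \<sigma>\<sigma>: "\<sigma> * \<sigma> = 1" using \<sigma>v by simp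
  have dI: "Inr d \<in> ?I" using dV dr by (simp add: Midx_def)
  define S0 where "S0 = (\<lambda>x y. M0 x y + (M0 x (Inr d) * M0 (Inl e) y - M0 x (Inl e) * M0 (Inr d) y) / \<sigma>)"
  have schur: "det_on ?I M0 = \<sigma> * \<sigma> * det_on (?I - {Inl e, Inr d}) S0"
    unfolding S0_def by (rule det_on_schur2[OF finI eI dI]) (simp_all add: M0_def \<sigma>_def[symmetric] \<sigma>0)
  define Lm where "Lm = (if d = a then A @ B else B @ A)"
  define rotCC where "rotCC = rot'(k := Lm)"
  have C1: "det_on (Midx (E - {e}) (V - {d}) r) S0 = det_on (Midx (E - {e}) (V - {d}) r) (Mmat \<theta> \<alpha> (V - {d}) rotCC)"
  proof (rule det_on_cong)
    fix x y assume xI: "x \<in> Midx (E - {e}) (V - {d}) r" and yI: "y \<in> Midx (E - {e}) (V - {d}) r"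
    have M0n: "M0 x' y' = ?M' x' y'" if "x' \<noteq> Inl e \<or> y' \<noteq> Inl e" for x' y' using that by (auto simp: M0_def)
    define W0 where "W0 p q = (\<Sum>v\<in>V - {a, b}. Wl (rot v) p q)" for p q
    have Wae: "Wl (rot' a) e q = Sl A q" if "q \<noteq> e" for q using rot'a pee pex[OF that] SAe WAe by simp
    have Wbe: "Wl (rot' b) e q = - Sl B q" if "q \<noteq> e" for q using rot'b pee pex[OF that] SBe WBe by simp
    have Woe: "(\<Sum>v\<in>V - {a, b}. Wl (rot' v) e q) = 0" for q
    proof (rule sum.neutral, rule ballI)
      fix v assume v: "v \<in> V - {a, b}"
      have v': "v \<in> V" "v \<noteq> a" "v \<noteq> b" using v by auto
      have "Wl (rot v) e q = 0" by (rule Wl_zero, rule pe0, erule noe[OF v'])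
      then show "Wl (rot' v) e q = 0" using v rot'o by auto
    qed
    have fe: "fcoef \<theta> V rot' e q = -(\<theta>/4) * (Sl A q - Sl B q)" if "q \<noteq> e" for q
      unfolding fcoef_Wl sum_split2[OF finV aV bV ab, of "\<lambda>v. Wl (rot' v) e q"] Wae[OF that] Wbe[OF that] Woe
      by simp
    have fe': "fcoef \<theta> V rot' p e = (\<theta>/4) * (Sl A p - Sl B p)" if "p \<noteq> e" for p
    proof -
      have "(\<Sum>v\<in>V. Wl (rot' v) p e) = - (\<Sum>v\<in>V. Wl (rot' v) e p)"
        unfolding sum_negf[symmetric] by (rule sum.cong[OF refl], rule Wl_antisym)
      then have "fcoef \<theta> V rot' p e = - fcoef \<theta> V rot' e p" unfolding fcoef_Wl by simp
      then show ?thesis using fe[OF that] by simp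
    qed
    have fpq: "fcoef \<theta> V rot' p q = -(\<theta>/4) * (Wl A p q + Wl B p q + W0 p q)" if "p \<noteq> e" "q \<noteq> e" for p q
    proof -
      have "(\<Sum>v\<in>V - {a, b}. Wl (rot' v) p q) = W0 p q" unfolding W0_def
        by (rule sum.cong) (auto simp: rot'o)
      moreover have "Wl (rot' a) p q = Wl A p q" "Wl (rot' b) p q = Wl B p q"
        using rot'a rot'b pex that by simp_all
      ultimately show ?thesis
        unfolding fcoef_Wl sum_split2[OF finV aV bV ab, of "\<lambda>v. Wl (rot' v) p q"] by simp
    qed
    have fC: "fcoef \<theta> (V - {d}) rotCC p q = -(\<theta>/4) * (Wl Lm p q + W0 p q)" for p q
    proof -
      have "(\<Sum>v\<in>V - {d}. Wl (rotCC v) p q) = Wl (rotCC k) p q + (\<Sum>v\<in>V - {d} - {k}. Wl (rotCC v) p q)"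
        by (rule sum.remove) (use finV kV kd in auto)
      also have "V - {d} - {k} = V - {a, b}" using dk by auto
      also have "(\<Sum>v\<in>V - {a, b}. Wl (rotCC v) p q) = W0 p q" unfolding W0_def
        by (rule sum.cong) (use dk in \<open>auto simp: rotCC_def rot'o\<close>)
      finally show ?thesis unfolding fcoef_Wl by (simp add: rotCC_def)
    qed
    have kdsum: "Sl (rot' k) p + Sl (rot' d) p = Sl A p + Sl B p" if "p \<noteq> e" for p
      using dk Slap[OF that] Slbp[OF that] by auto
    have vcases: "v = k \<or> (v \<noteq> a \<and> v \<noteq> b)" if "v \<in> V - {d}" for v using that dk by auto
    show "S0 x y = Mmat \<theta> \<alpha> (V - {d}) rotCC x y"
    proof (cases x)
      case (Inl p)
      have pe': "p \<noteq> e" and pE: "p \<in> E" using xI Inl by (auto simp: Midx_def)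
      show ?thesis
      proof (cases y)
        case (Inl q)
        note yq = Inl
        have qe: "q \<noteq> e" using yI Inl by (auto simp: Midx_def)
        have S0v: "S0 x y = ?M' (Inl p) (Inl q) + ((- Sl (rot' d) p) * fcoef \<theta> V rot' e q
                      - fcoef \<theta> V rot' p e * Sl (rot' d) q) / \<sigma>"
          unfolding S0_def \<open>x = Inl p\<close> yq using pe' qe by (simp add: M0n)
        show ?thesis
        proof (cases "p = q")
          case True
          have "S0 x y = \<alpha> p" using S0v True by (simp add: fe[OF qe] fe'[OF qe] algebra_simps)
          then show ?thesis using True unfolding \<open>x = Inl p\<close> yq by simp
        next
          case False
          have L: "S0 x y = -(\<theta>/4) * (Wl A p q + Wl B p q + W0 p q)
               + ((- Sl (rot' d) p) * (-(\<theta>/4) * (Sl A q - Sl B q)) - (\<theta>/4) * (Sl A p - Sl B p) * Sl (rot' d) q) / \<sigma>"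
            unfolding S0v using False fpq[OF pe' qe] fe[OF qe] fe'[OF pe'] by simp
          have R: "Mmat \<theta> \<alpha> (V - {d}) rotCC x y = -(\<theta>/4) * (Wl Lm p q + W0 p q)"
            unfolding \<open>x = Inl p\<close> yq using False fC by simp
          show ?thesis unfolding L R
          proof (cases "d = a")
            case True
            then show "-(\<theta>/4) * (Wl A p q + Wl B p q + W0 p q)
               + ((- Sl (rot' d) p) * (-(\<theta>/4) * (Sl A q - Sl B q)) - (\<theta>/4) * (Sl A p - Sl B p) * Sl (rot' d) q) / \<sigma>
               = -(\<theta>/4) * (Wl Lm p q + W0 p q)"
              using \<sigma>v Slap[OF pe'] Slap[OF qe] by (simp add: Lm_def Wl_append algebra_simps)
          next
            case False
            then have db: "d = b" using dk by auto
            then show "-(\<theta>/4) * (Wl A p q + Wl B p q + W0 p q)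
               + ((- Sl (rot' d) p) * (-(\<theta>/4) * (Sl A q - Sl B q)) - (\<theta>/4) * (Sl A p - Sl B p) * Sl (rot' d) q) / \<sigma>
               = -(\<theta>/4) * (Wl Lm p q + W0 p q)"
              using \<sigma>v False Slbp[OF pe'] Slbp[OF qe] by (simp add: Lm_def Wl_append algebra_simps)
          qed
        qed
      next
        case (Inr v)
        have v: "v \<in> V - {d}" "v \<noteq> r" using yI Inr by (auto simp: Midx_def)
        have S0v: "S0 x y = - Sl (rot' v) p + ((- Sl (rot' d) p) * (- Sl (rot' v) e)) / \<sigma>"
          unfolding S0_def \<open>x = Inl p\<close> Inr using pe' by (simp add: M0n)
        show ?thesis
        proof (cases "v = k")
          case True
          have "Sl Lm p = Sl A p + Sl B p" by (simp add: Lm_def)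
          moreover have "S0 x y = - Sl (rot' k) p - Sl (rot' d) p" using S0v True Slke \<sigma>0 by simp
          ultimately show ?thesis unfolding \<open>x = Inl p\<close> Inr using True kdsum[OF pe'] by (simp add: rotCC_def)
        next
          case False
          then have "v \<noteq> a" "v \<noteq> b" using vcases[OF v(1)] by auto
          then have "Sl (rot' v) e = 0" using Sloe v by auto
          then have "S0 x y = - Sl (rot' v) p" using S0v by simp
          then show ?thesis unfolding \<open>x = Inl p\<close> Inr using False by (simp add: rotCC_def)
        qed
      qed
    next
      case (Inr v)
      have v: "v \<in> V - {d}" "v \<noteq> r" using xI Inr by (auto simp: Midx_def)
      show ?thesis
      proof (cases y)
        case (Inl q)
        note yq = Inl
        have qe: "q \<noteq> e" using yI Inl by (auto simp: Midx_def)
        have S0v: "S0 x y = Sl (rot' v) q + (- (Sl (rot' v) e * Sl (rot' d) q)) / \<sigma>"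
          unfolding S0_def \<open>x = Inr v\<close> yq using qe by (simp add: M0n)
        show ?thesis
        proof (cases "v = k")
          case True
          have "Sl Lm q = Sl A q + Sl B q" by (simp add: Lm_def)
          moreover have "S0 x y = Sl (rot' k) q + Sl (rot' d) q" using S0v True Slke \<sigma>0 by simp
          ultimately show ?thesis unfolding \<open>x = Inr v\<close> yq using True kdsum[OF qe] by (simp add: rotCC_def)
        next
          case False
          then have "v \<noteq> a" "v \<noteq> b" using vcases[OF v(1)] by auto
          then have "Sl (rot' v) e = 0" using Sloe v by auto
          then have "S0 x y = Sl (rot' v) q" using S0v by simp
          then show ?thesis unfolding \<open>x = Inr v\<close> yq using False by (simp add: rotCC_def)
        qed
      next
        case (Inr w)
        then show ?thesis unfolding S0_def \<open>x = Inr v\<close> by (simp add: M0n)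
      qed
    qed
  qed
  have SlLm: "Sl Lm x = Sl A x + Sl B x" for x by (simp add: Lm_def)
  have balC: "(\<Sum>v\<in>V - {d}. Sl (rotCC v) x) = 0" if x: "x \<in> E - {e}" for x
  proof -
    have xe: "x \<noteq> e" using x by simp
    have "(\<Sum>v\<in>V - {d}. Sl (rotCC v) x) = Sl (rotCC k) x + (\<Sum>v\<in>V - {d} - {k}. Sl (rotCC v) x)"
      by (rule sum.remove) (use finV kV kd in auto)
    also have "V - {d} - {k} = V - {a, b}" using dk by auto
    also have "(\<Sum>v\<in>V - {a, b}. Sl (rotCC v) x) = (\<Sum>v\<in>V - {a, b}. Sl (rot' v) x)"
      by (rule sum.cong) (use dk in \<open>auto simp: rotCC_def\<close>)
    also have "Sl (rotCC k) x = Sl (rot' a) x + Sl (rot' b) x"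
      by (simp add: rotCC_def SlLm Slap[OF xe] Slbp[OF xe])
    also have "Sl (rot' a) x + Sl (rot' b) x + (\<Sum>v\<in>V - {a, b}. Sl (rot' v) x) = (\<Sum>v\<in>V. Sl (rot' v) x)"
      by (rule sum_split2[OF finV aV bV ab, symmetric])
    also have "\<dots> = (\<Sum>v\<in>V. Sl (rot v) x)" by (rule sum.cong) (auto simp: Slrot')
    also have "\<dots> = 0" using bal x by simp
    finally show ?thesis .
  qed
  have rtC: "\<exists>n. rotC w = rotate n (rotCC w)" if w: "w \<in> V - {d}" for w
  proof (cases "w = k")
    case True
    obtain n where n: "rotC k = rotate n (A @ B)"
      using contrC_merged by (auto simp: cyc_compat_def merged_rot_def k_def A_def B_def a_def b_def)
    have "\<exists>m. A @ B = rotate m Lm"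
      by (cases "d = a") (auto simp: Lm_def intro: exI[of _ 0] exI[of _ "length B"] rotate_append[symmetric])
    then obtain m where m: "A @ B = rotate m Lm" by blast
    show ?thesis using True n m by (simp add: rotCC_def rotate_rotate) blast
  next
    case False
    then have "w \<noteq> a" "w \<noteq> b" using w dk by auto
    then obtain n where "rotC w = rotate n (rot w)"
      using contrC_other w by (auto simp: cyc_compat_def a_def b_def)
    then show ?thesis using False \<open>w \<noteq> a\<close> \<open>w \<noteq> b\<close> by (simp add: rotCC_def rot'o) blast
  qed
  have C2: "det_on (Midx (E - {e}) (V - {d}) r) (Mmat \<theta> \<alpha> (V - {d}) rotC)
      = det_on (Midx (E - {e}) (V - {d}) r) (Mmat \<theta> \<alpha> (V - {d}) rotCC)"
    by (rule Mmat_inv_all[OF finite_Diff[OF finV] finite_Diff[OF finE] _ balC rtC]) (use root dr in auto)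
  have "det_on (Midx E V r) (Mmat \<theta> \<alpha> V rot) = \<alpha> e * det_on (Midx (E - {e}) V r) (Mmat \<theta> \<alpha> V rotD)
      + det_on (Midx (E - {e}) (V - {d}) r) (Mmat \<theta> \<alpha> (V - {d}) rotC)"
    using step1 split D1 D2 schur C1 C2 \<sigma>\<sigma> by (simp add: Midx_minus2)
  then show ?thesis by (simp add: d_def)
qed


end
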